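(* Let $a\in(-\infty,1)$ and $\omega\in\mathbb D_a$. Then for every $x>0$, $$\frac{\eta_a}{\pi}\le r(\omega)\le\min\left\{\frac{2(x+1)}{\pi x}(1-\omega(x))^{1/2},\ \frac2\pi\right\}.$$
   Context: Let $\rho(x)=(1+|x|)^{-1/2}$ and $\eta_a=\frac{1}{2^{9/2}(4+|a|)^3}$. $\mathbb D_a$ is the set of continuous even functions $\omega$ on $\mathbb R$ with $\|\rho\omega\|_{L^\infty}<\infty$ such that $\omega(0)=1$; $(1-x^2)_+\le\omega(x)\le1$ for all $x$; $\omega$ is non-increasing on $[0,\infty)$; $s\mapsto\omega(\sqrt s)$ is convex on $[0,\infty)$; and the left derivative satisfies $\omega'_-(1/2)\le-\eta_a$. $r(\omega)=\frac1\pi\int_0^\infty\frac{\omega(0)-\omega(y)}{y^2}\,dy$. *)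

theory Defs
  imports "HOL-Analysis.Analysis"
begin

definition rho :: "real \<Rightarrow> real" where
  "rho x = 1 / sqrt (1 + \<bar>x\<bar>)"

definition eta :: "real \<Rightarrow> real" where
  "eta a = 1 / (2 powr (9/2) * (4 + \<bar>a\<bar>) ^ 3)"

definition has_left_deriv :: "(real \<Rightarrow> real) \<Rightarrow> real \<Rightarrow> real \<Rightarrow> bool" where
  "has_left_deriv w d t \<longleftrightarrow> ((\<lambda>h. (w (t + h) - w t) / h) \<longlongrightarrow> d) (at_left 0)"

definition DD :: "real \<Rightarrow> (real \<Rightarrow> real) set" where
  "DD a = {w. continuous_on UNIV w
      \<and> (\<forall>x. w (-x) = w x)
      \<and> bounded (range (\<lambda>x. rho x * w x))
      \<and> w 0 = 1
      \<and> (\<forall>x. max 0 (1 - x^2) \<le> w x \<and> w x \<le> 1)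
      \<and> (\<forall>x y. 0 \<le> x \<longrightarrow> x \<le> y \<longrightarrow> w y \<le> w x)
      \<and> convex_on {0..} (\<lambda>s. w (sqrt s))
      \<and> (\<exists>d. has_left_deriv w d (1/2) \<and> d \<le> - eta a)}"

definition r_fun :: "(real \<Rightarrow> real) \<Rightarrow> real" where
  "r_fun w = (1 / pi) * integral {0<..} (\<lambda>y. (w 0 - w y) / y^2)"

end

theory Submission
  imports Defs
begin
lemma min_int:
  fixes A B :: real assumes A: "A > 0" and B: "B > 0"
  shows "((\<lambda>y. min A (B / y^2)) has_integral 2 * sqrt (A * B)) {0<..}"
proof -
  define c where "c = sqrt (B / A)"
  have c: "c > 0" using A B by (simp add: c_def)
  have cc: "c^2 = B / A" using A B by (simp add: c_def)
  have 1: "((\<lambda>y. min A (B / y^2)) has_integral A * c) {0<..<c}"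
  proof -
    have "((\<lambda>y. A) has_integral A * c) {0..c}"
      using has_integral_const_real[of A 0 c] c by (simp add: mult.commute)
    then have "((\<lambda>y. A) has_integral A * c) {0<..<c}"
      using has_integral_Icc_iff_Ioo by blast
    moreover have "min A (B / y^2) = A" if "y \<in> {0<..<c}" for y
    proof -
      have "y^2 \<le> c^2" using that by (intro power_mono) auto
      then have "A * y^2 \<le> B" using cc A by (simp add: field_simps)
      then show ?thesis using that A by (simp add: field_simps)
    qed
    ultimately show ?thesis using has_integral_cong by (metis (no_types, lifting))
  qed
  have 2: "((\<lambda>y. min A (B / y^2)) has_integral B / c) {c..}"
  proof -
    have "((\<lambda>y. 1 / y^2) has_integral 1 / c) {c..}"
      using has_integral_inverse_power_to_inf[of 2 c] c by simp
    then have "((\<lambda>y. B * (1 / y^2)) has_integral B * (1 / c)) {c..}"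
      by (rule has_integral_mult_right)
    moreover have "min A (B / y^2) = B * (1 / y^2)" if "y \<in> {c..}" for y
    proof -
      have "c^2 \<le> y^2" using that c by (intro power_mono) auto
      then have "B \<le> A * y^2" using cc A by (simp add: field_simps)
      then show ?thesis using that A c by (simp add: field_simps)
    qed
    ultimately show ?thesis using has_integral_cong by (metis (no_types, lifting) times_divide_eq_right mult_1_right)
  qed
  have "((\<lambda>y. min A (B / y^2)) has_integral (A * c + B / c)) ({0<..<c} \<union> {c..})"
    proof (rule has_integral_Un[OF 1 2])
    have "{0<..<c} \<inter> {c..} = {}" by auto
    then show "negligible ({0<..<c} \<inter> {c..})" by simp
  qed
  moreover have "{0<..<c} \<union> {c..} = {0<..}" using c by auto
  moreover have "A * c + B / c = 2 * sqrt (A * B)"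
  proof -
    have "A * c = sqrt (A * B)" using A B by (simp add: c_def real_sqrt_divide real_sqrt_mult field_simps)
    moreover have "B / c = sqrt (A * B)" using A B by (simp add: c_def real_sqrt_divide real_sqrt_mult field_simps)
    ultimately show ?thesis by simp
  qed
  ultimately show ?thesis by simp
qed

lemma min_int0:
  fixes A B :: real assumes A: "A \<ge> 0" and B: "B \<ge> 0"
  shows "((\<lambda>y. min A (B / y^2)) has_integral 2 * sqrt (A * B)) {0<..}"
proof (cases "A > 0 \<and> B > 0")
  case True then show ?thesis using min_int by blast
next
  case False
  then have "A = 0 \<or> B = 0" using A B by auto
  then have "\<forall>y. min A (B / y^2) = 0" using A B by auto
  then show ?thesis using \<open>A = 0 \<or> B = 0\<close> by auto
qed

theorem mainTheorem7:
  fixes a x :: real and w :: "real \<Rightarrow> real"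
  assumes "a < 1" and "w \<in> DD a" and "x > 0"
  shows "eta a / pi \<le> r_fun w \<and>
         r_fun w \<le> min (2 * (x + 1) / (pi * x) * sqrt (1 - w x)) (2 / pi)"
proof -
  have cont: "continuous_on UNIV w" and w0: "w 0 = 1"
    and bnd: "\<And>y. max 0 (1 - y^2) \<le> w y \<and> w y \<le> 1"
    and mono: "\<And>y z. 0 \<le> y \<Longrightarrow> y \<le> z \<Longrightarrow> w z \<le> w y"
    and cvx: "convex_on {0..} (\<lambda>s. w (sqrt s))"
    and der: "\<exists>d. has_left_deriv w d (1/2) \<and> d \<le> - eta a"
    using assms(2) unfolding DD_def by auto
  define f where "f y = (w 0 - w y) / y^2" for y
  have chord: "w (sqrt (t * s)) \<le> (1 - t) + t * w (sqrt s)" if "0 \<le> t" "t \<le> 1" "0 \<le> s" for t s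
    using convex_onD[OF cvx, of t 0 s] that w0 by simp
  have F1: "0 \<le> f y \<and> f y \<le> min 1 (1 / y^2)" if "y > 0" for y
  proof -
    have "1 - w y \<le> y^2" "1 - w y \<le> 1" "0 \<le> 1 - w y" using bnd[of y] by auto
    then show ?thesis using that unfolding f_def w0 by (auto simp: field_simps)
  qed
  define \<delta> where "\<delta> = 1 - w x"
  have \<delta>0: "0 \<le> \<delta>" "\<delta> \<le> 1" using bnd[of x] by (auto simp: \<delta>_def)
  have F2: "f y \<le> min 1 (\<delta> / y^2) + min (\<delta> / x^2) (1 / y^2)" if "y > 0" for y
  proof (cases "y \<le> x")
    case True
    have "1 - w y \<le> \<delta>" using mono[of y x] True that by (simp add: \<delta>_def)
    then have "f y \<le> \<delta> / y^2" using that by (simp add: f_def w0 divide_right_mono)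
    then have "f y \<le> min 1 (\<delta> / y^2)" using F1[OF that] by simp
    moreover have "0 \<le> min (\<delta> / x^2) (1 / y^2)" using \<delta>0 by simp
    ultimately show ?thesis by linarith
  next
    case False
    define t where "t = x^2 / y^2"
    have t: "0 \<le> t" "t \<le> 1" using False that assms(3) unfolding t_def
      by (auto simp: field_simps intro!: power_mono)
    have "w (sqrt (t * y^2)) \<le> (1 - t) + t * w (sqrt (y^2))" by (rule chord[OF t]) simp
    moreover have "sqrt (t * y^2) = x" using that assms(3) by (simp add: t_def)
    moreover have "sqrt (y^2) = y" using that by simp
    ultimately have "w x \<le> (1 - t) + t * w y" by simp
    then have "t * (1 - w y) \<le> \<delta>" by (simp add: \<delta>_def algebra_simps)
    then have "x^2 * (1 - w y) \<le> \<delta> * y^2" using that by (simp add: t_def field_simps)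
    then have "f y \<le> \<delta> / x^2" using that assms(3) by (simp add: f_def w0 field_simps)
    then have "f y \<le> min (\<delta> / x^2) (1 / y^2)" using F1[OF that] by simp
    moreover have "0 \<le> min 1 (\<delta> / y^2)" using \<delta>0 by simp
    ultimately show ?thesis by linarith
  qed
  define c where "c = 1 - w (1/2)"
  have c0: "0 \<le> c" using bnd[of "1/2"] by (simp add: c_def)
  have F3: "min (4 * c) (c / y^2) \<le> f y" if "y > 0" for y
  proof (cases "y \<le> 1/2")
    case True
    define t where "t = 4 * y^2"
    have t: "0 \<le> t" "t \<le> 1" using True that unfolding t_def
      using power_mono[of y "1/2" 2] by (auto simp: power2_eq_square)
    have "w (sqrt (t * (1/4))) \<le> (1 - t) + t * w (sqrt (1/4))" by (rule chord[OF t]) simp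
    moreover have "sqrt (t * (1/4)) = y" using that by (simp add: t_def)
    moreover have "sqrt (1/4) = (1/2::real)" by (simp add: real_sqrt_divide)
    ultimately have "w y \<le> (1 - t) + t * w (1/2)" by simp
    then have "4 * y^2 * c \<le> 1 - w y" by (simp add: c_def t_def algebra_simps)
    then have "4 * c \<le> f y" using that by (simp add: f_def w0 field_simps)
    then show ?thesis by simp
  next
    case False
    have "c \<le> 1 - w y" using mono[of "1/2" y] False by (simp add: c_def)
    then have "c / y^2 \<le> f y" using that by (simp add: f_def w0 divide_right_mono)
    then show ?thesis by simp
  qed
  have ceta: "eta a \<le> 4 * c"
  proof -
    obtain d where d: "has_left_deriv w d (1/2)" "d \<le> - eta a" using der by blast
    have lim1: "((\<lambda>h. (w (1/2 + h) - w (1/2)) / h) \<longlongrightarrow> d) (at_left 0)"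
      using d(1) unfolding has_left_deriv_def by simp
    have lim2: "((\<lambda>h. -4 * (1 + h) * c) \<longlongrightarrow> -4 * (1 + 0) * c) (at_left 0)"
      by (intro tendsto_intros)
    have ev: "eventually (\<lambda>h. -4 * (1 + h) * c \<le> (w (1/2 + h) - w (1/2)) / h) (at_left (0::real))"
    proof -
      have "eventually (\<lambda>h. h \<in> {-1/2<..<0}) (at_left (0::real))"
        by (rule eventually_at_left_real) simp
      then show ?thesis
      proof (rule eventually_mono)
        fix h :: real assume h: "h \<in> {-1/2<..<0}"
        define y where "y = 1/2 + h"
        define t where "t = 4 * y^2"
        have y: "0 < y" "y < 1/2" using h by (auto simp: y_def)
        have t: "0 \<le> t" "t \<le> 1" using y unfolding t_def
          using power_mono[of y "1/2" 2] by (auto simp: power2_eq_square)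
        have "w (sqrt (t * (1/4))) \<le> (1 - t) + t * w (sqrt (1/4))" by (rule chord[OF t]) simp
        moreover have "sqrt (t * (1/4)) = y" using y by (simp add: t_def)
        moreover have "sqrt (1/4) = (1/2::real)" by (simp add: real_sqrt_divide)
        ultimately have "w y \<le> (1 - t) + t * w (1/2)" by simp
        then have "w y - w (1/2) \<le> (1 - t) * c" by (simp add: c_def algebra_simps)
        also have "(1 - t) = -4 * h * (1 + h)" by (simp add: t_def y_def power2_eq_square algebra_simps)
        finally have "w (1/2 + h) - w (1/2) \<le> -4 * h * (1 + h) * c" by (simp add: y_def)
        then show "-4 * (1 + h) * c \<le> (w (1/2 + h) - w (1/2)) / h"
          using h by (simp add: field_simps)
      qed
    qed
    have "-4 * (1 + 0) * c \<le> d"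
      by (rule tendsto_le[OF _ lim1 lim2 ev]) simp
    then show ?thesis using d(2) by simp
  qed
  have fcont: "continuous_on {0<..} f"
    unfolding f_def by (intro continuous_intros continuous_on_subset[OF cont]) auto
  have gint: "(\<lambda>y::real. min 1 (1 / y^2)) integrable_on {0<..}"
    using min_int0[of 1 1] by (auto intro: has_integral_integrable)
  have fint: "f integrable_on {0<..}"
  proof (rule measurable_bounded_by_integrable_imp_integrable_real[OF _ gint])
    show "f \<in> borel_measurable (lebesgue_on {0<..})"
      by (rule continuous_imp_measurable_on_sets_lebesgue[OF fcont]) simp
    show "\<bar>f y\<bar> \<le> min 1 (1 / y^2)" if "y \<in> {0<..}" for y using F1[of y] that by auto
  qed simp
  have rf: "r_fun w = (1 / pi) * integral {0<..} f" unfolding r_fun_def f_def by simp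
  have I1: "integral {0<..} f \<le> 2"
    using integral_le[OF fint gint] F1 integral_unique[OF min_int0[of 1 1]] by auto
  have I2: "4 * c \<le> integral {0<..} f"
  proof -
    have "2 * sqrt (4 * c * c) = 4 * c" using c0 by (simp add: real_sqrt_mult)
    then show ?thesis
      using integral_le[OF has_integral_integrable[OF min_int0[of "4*c" c]] fint] F3 c0
        integral_unique[OF min_int0[of "4*c" c]] by auto
  qed
  have I3: "integral {0<..} f \<le> 2 * sqrt \<delta> + 2 * sqrt (\<delta> / x^2)"
  proof -
    have h: "((\<lambda>y. min 1 (\<delta> / y^2) + min (\<delta> / x^2) (1 / y^2)) has_integral
        (2 * sqrt (1 * \<delta>) + 2 * sqrt (\<delta> / x^2 * 1))) {0<..}"
      by (intro has_integral_add min_int0) (use \<delta>0 in auto)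
    show ?thesis using integral_le[OF fint has_integral_integrable[OF h]] F2 integral_unique[OF h] by auto
  qed
  have sx: "sqrt (\<delta> / x^2) = sqrt \<delta> / x" using assms(3) by (simp add: real_sqrt_divide)
  have pi0: "pi > 0" by simp
  show ?thesis
  proof (intro conjI)
    show "eta a / pi \<le> r_fun w" unfolding rf using ceta I2 pi0
      by (simp add: divide_right_mono)
    have "r_fun w \<le> 2 / pi" unfolding rf using I1 pi0 by (simp add: divide_right_mono)
    moreover have "r_fun w \<le> 2 * (x + 1) / (pi * x) * sqrt (1 - w x)"
    proof -
      have "2 * sqrt \<delta> + 2 * sqrt (\<delta> / x^2) = 2 * (x + 1) / x * sqrt \<delta>"
        using assms(3) unfolding sx by (simp add: field_simps)
      then have "integral {0<..} f \<le> 2 * (x + 1) / x * sqrt \<delta>" using I3 by simp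
      then have "(1/pi) * integral {0<..} f \<le> (1/pi) * (2 * (x + 1) / x * sqrt \<delta>)"
        using pi0 by (intro mult_left_mono) auto
      then show ?thesis unfolding rf \<delta>_def by (simp add: field_simps)
    qed
    ultimately show "r_fun w \<le> min (2 * (x + 1) / (pi * x) * sqrt (1 - w x)) (2 / pi)" by simp
  qed
qed
end
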